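(* Let $\mathcal{C}$ be a peircean bicategory with monoidal product $\otimes$, and define $a\otimes^\bullet b:=\neg(\neg a\otimes\neg b)$. Then for all arrows $c:X\to Y$ and $d:Z\to W$, $c\otimes d\le c\otimes^\bullet d$.
   Context: Composition in diagrammatic order. A cartesian bicategory is a poset-enriched symmetric monoidal category $(\mathcal{C},\otimes,I)$ with, for each $X$, commutative comonoid $(\mathrm{copy}_X,\mathrm{disc}_X)$ and monoid $(\mathrm{cocopy}_X,\mathrm{codisc}_X)$ forming special Frobenius bimonoids, comonoid left adjoint to monoid, every arrow $c$ satisfying $c;\mathrm{copy}\le\mathrm{copy};(c\otimes c)$ and $c;\mathrm{disc}\le\mathrm{disc}$, with standard coherence. A map is an arrow $f$ with $f;\mathrm{copy}=\mathrm{copy};(f\otimes f)$ and $f;\mathrm{disc}=\mathrm{disc}$. A peircean bicategory is a cartesian bicategory whose homsets carry Boolean algebras (with the given order) such that $f;\neg c=\neg(f;c)$ for every map $f:X\to Y$ and arrow $c:Y\to Z$. *)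

theory Defs
  imports Main
begin

text \<open>Composition is written in diagrammatic order: comp f g means "first f, then g"
  and requires cod f = dom g.  Arrows carry their domain and codomain; the
  symmetric monoidal structure is taken to be strict (associators and unitors are
  identities), the symmetry is explicit.\<close>

locale strict_smc =
  fixes arr :: "'a \<Rightarrow> bool"
    and dom :: "'a \<Rightarrow> 'o"
    and cod :: "'a \<Rightarrow> 'o"
    and ident :: "'o \<Rightarrow> 'a"
    and comp :: "'a \<Rightarrow> 'a \<Rightarrow> 'a"
    and otimes :: "'o \<Rightarrow> 'o \<Rightarrow> 'o"
    and unit :: "'o"
    and tens :: "'a \<Rightarrow> 'a \<Rightarrow> 'a"
    and sym :: "'o \<Rightarrow> 'o \<Rightarrow> 'a"
  assumes ident_arr: "arr (ident X)" "dom (ident X) = X" "cod (ident X) = X"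
    and comp_arr: "\<lbrakk>arr f; arr g; cod f = dom g\<rbrakk> \<Longrightarrow>
          arr (comp f g) \<and> dom (comp f g) = dom f \<and> cod (comp f g) = cod g"
    and comp_ident_left: "arr f \<Longrightarrow> comp (ident (dom f)) f = f"
    and comp_ident_right: "arr f \<Longrightarrow> comp f (ident (cod f)) = f"
    and comp_assoc: "\<lbrakk>arr f; arr g; arr h; cod f = dom g; cod g = dom h\<rbrakk> \<Longrightarrow>
          comp (comp f g) h = comp f (comp g h)"
    and otimes_assoc: "otimes (otimes X Y) Z = otimes X (otimes Y Z)"
    and otimes_unit: "otimes unit X = X" "otimes X unit = X"
    and tens_arr: "\<lbrakk>arr f; arr g\<rbrakk> \<Longrightarrow>
          arr (tens f g) \<and> dom (tens f g) = otimes (dom f) (dom g)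
            \<and> cod (tens f g) = otimes (cod f) (cod g)"
    and tens_assoc: "\<lbrakk>arr f; arr g; arr h\<rbrakk> \<Longrightarrow> tens (tens f g) h = tens f (tens g h)"
    and tens_unit: "arr f \<Longrightarrow> tens (ident unit) f = f" "arr f \<Longrightarrow> tens f (ident unit) = f"
    and tens_ident: "tens (ident X) (ident Y) = ident (otimes X Y)"
    and interchange: "\<lbrakk>arr f; arr g; arr h; arr k; cod f = dom g; cod h = dom k\<rbrakk> \<Longrightarrow>
          tens (comp f g) (comp h k) = comp (tens f h) (tens g k)"
    and sym_arr: "arr (sym X Y)" "dom (sym X Y) = otimes X Y" "cod (sym X Y) = otimes Y X"
    and sym_natural: "\<lbrakk>arr f; arr g\<rbrakk> \<Longrightarrow>
          comp (tens f g) (sym (cod f) (cod g)) = comp (sym (dom f) (dom g)) (tens g f)"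
    and sym_inverse: "comp (sym X Y) (sym Y X) = ident (otimes X Y)"
    and sym_hexagon: "sym X (otimes Y Z) = comp (tens (sym X Y) (ident Z)) (tens (ident Y) (sym X Z))"

locale poset_enriched_smc = strict_smc +
  fixes le :: "'a \<Rightarrow> 'a \<Rightarrow> bool"
  assumes le_parallel: "le f g \<Longrightarrow> arr f \<and> arr g \<and> dom f = dom g \<and> cod f = cod g"
    and le_refl: "arr f \<Longrightarrow> le f f"
    and le_trans: "\<lbrakk>le f g; le g h\<rbrakk> \<Longrightarrow> le f h"
    and le_antisym: "\<lbrakk>le f g; le g f\<rbrakk> \<Longrightarrow> f = g"
    and comp_mono: "\<lbrakk>le f f'; le g g'; cod f = dom g\<rbrakk> \<Longrightarrow> le (comp f g) (comp f' g')"
    and tens_mono: "\<lbrakk>le f f'; le g g'\<rbrakk> \<Longrightarrow> le (tens f g) (tens f' g')"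

locale cartesian_bicategory = poset_enriched_smc +
  fixes copy :: "'o \<Rightarrow> 'a"
    and disc :: "'o \<Rightarrow> 'a"
    and cocopy :: "'o \<Rightarrow> 'a"
    and codisc :: "'o \<Rightarrow> 'a"
  assumes copy_arr: "arr (copy X)" "dom (copy X) = X" "cod (copy X) = otimes X X"
    and disc_arr: "arr (disc X)" "dom (disc X) = X" "cod (disc X) = unit"
    and cocopy_arr: "arr (cocopy X)" "dom (cocopy X) = otimes X X" "cod (cocopy X) = X"
    and codisc_arr: "arr (codisc X)" "dom (codisc X) = unit" "cod (codisc X) = X"
    and copy_assoc: "comp (copy X) (tens (copy X) (ident X)) = comp (copy X) (tens (ident X) (copy X))"
    and copy_unit: "comp (copy X) (tens (disc X) (ident X)) = ident X"
    and copy_comm: "comp (copy X) (sym X X) = copy X"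
    and cocopy_assoc: "comp (tens (cocopy X) (ident X)) (cocopy X) = comp (tens (ident X) (cocopy X)) (cocopy X)"
    and cocopy_unit: "comp (tens (codisc X) (ident X)) (cocopy X) = ident X"
    and cocopy_comm: "comp (sym X X) (cocopy X) = cocopy X"
    and frobenius1: "comp (tens (copy X) (ident X)) (tens (ident X) (cocopy X)) = comp (cocopy X) (copy X)"
    and frobenius2: "comp (tens (ident X) (copy X)) (tens (cocopy X) (ident X)) = comp (cocopy X) (copy X)"
    and special: "comp (copy X) (cocopy X) = ident X"
    and copy_adj_unit: "le (ident X) (comp (copy X) (cocopy X))"
    and copy_adj_counit: "le (comp (cocopy X) (copy X)) (ident (otimes X X))"
    and disc_adj_unit: "le (ident X) (comp (disc X) (codisc X))"
    and disc_adj_counit: "le (comp (codisc X) (disc X)) (ident unit)"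
    and lax_copy: "arr c \<Longrightarrow> le (comp c (copy (cod c))) (comp (copy (dom c)) (tens c c))"
    and lax_disc: "arr c \<Longrightarrow> le (comp c (disc (cod c))) (disc (dom c))"
    and copy_otimes: "copy (otimes X Y) =
          comp (tens (copy X) (copy Y)) (tens (tens (ident X) (sym X Y)) (ident Y))"
    and disc_otimes: "disc (otimes X Y) = tens (disc X) (disc Y)"
    and copy_I: "copy unit = ident unit"
    and disc_I: "disc unit = ident unit"
    and cocopy_otimes: "cocopy (otimes X Y) =
          comp (tens (tens (ident X) (sym Y X)) (ident Y)) (tens (cocopy X) (cocopy Y))"
    and codisc_otimes: "codisc (otimes X Y) = tens (codisc X) (codisc Y)"
    and cocopy_I: "cocopy unit = ident unit"
    and codisc_I: "codisc unit = ident unit"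
begin

definition par :: "'a \<Rightarrow> 'a \<Rightarrow> bool" where
  "par f g \<longleftrightarrow> arr f \<and> arr g \<and> dom f = dom g \<and> cod f = cod g"

definition is_map :: "'a \<Rightarrow> bool" where
  "is_map f \<longleftrightarrow> arr f \<and> comp f (copy (cod f)) = comp (copy (dom f)) (tens f f)
      \<and> comp f (disc (cod f)) = disc (dom f)"

end

locale peircean_bicategory_loc = cartesian_bicategory +
  fixes neg and meet and join and top and bot
  assumes neg_arr: "arr c \<Longrightarrow> arr (neg c) \<and> dom (neg c) = dom c \<and> cod (neg c) = cod c"
    and meet_arr: "par f g \<Longrightarrow> arr (meet f g) \<and> dom (meet f g) = dom f \<and> cod (meet f g) = cod f"
    and meet_lower: "par f g \<Longrightarrow> le (meet f g) f" "par f g \<Longrightarrow> le (meet f g) g"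
    and meet_greatest: "\<lbrakk>le h f; le h g\<rbrakk> \<Longrightarrow> le h (meet f g)"
    and join_arr: "par f g \<Longrightarrow> arr (join f g) \<and> dom (join f g) = dom f \<and> cod (join f g) = cod f"
    and join_upper: "par f g \<Longrightarrow> le f (join f g)" "par f g \<Longrightarrow> le g (join f g)"
    and join_least: "\<lbrakk>le f h; le g h\<rbrakk> \<Longrightarrow> le (join f g) h"
    and top_arr: "arr (top X Y)" "dom (top X Y) = X" "cod (top X Y) = Y"
    and top_greatest: "arr f \<Longrightarrow> le f (top (dom f) (cod f))"
    and bot_arr: "arr (bot X Y)" "dom (bot X Y) = X" "cod (bot X Y) = Y"
    and bot_least: "arr f \<Longrightarrow> le (bot (dom f) (cod f)) f"
    and distrib: "\<lbrakk>par f g; par g h\<rbrakk> \<Longrightarrow> meet f (join g h) = join (meet f g) (meet f h)"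
    and neg_meet: "arr f \<Longrightarrow> meet f (neg f) = bot (dom f) (cod f)"
    and neg_join: "arr f \<Longrightarrow> join f (neg f) = top (dom f) (cod f)"
    and map_neg: "\<lbrakk>is_map f; arr c; cod f = dom c\<rbrakk> \<Longrightarrow> comp f (neg c) = neg (comp f c)"

record ('o, 'a) pbicat =
  Arr :: "'a \<Rightarrow> bool"
  Dom :: "'a \<Rightarrow> 'o"
  Cod :: "'a \<Rightarrow> 'o"
  Ident :: "'o \<Rightarrow> 'a"
  Comp :: "'a \<Rightarrow> 'a \<Rightarrow> 'a"
  Otimes :: "'o \<Rightarrow> 'o \<Rightarrow> 'o"
  Unit :: "'o"
  Tens :: "'a \<Rightarrow> 'a \<Rightarrow> 'a"
  Sym :: "'o \<Rightarrow> 'o \<Rightarrow> 'a"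
  Le :: "'a \<Rightarrow> 'a \<Rightarrow> bool"
  Copy :: "'o \<Rightarrow> 'a"
  Disc :: "'o \<Rightarrow> 'a"
  Cocopy :: "'o \<Rightarrow> 'a"
  Codisc :: "'o \<Rightarrow> 'a"
  Neg :: "'a \<Rightarrow> 'a"
  Meet :: "'a \<Rightarrow> 'a \<Rightarrow> 'a"
  Join :: "'a \<Rightarrow> 'a \<Rightarrow> 'a"
  Top :: "'o \<Rightarrow> 'o \<Rightarrow> 'a"
  Bot :: "'o \<Rightarrow> 'o \<Rightarrow> 'a"

definition peircean_bicategory :: "('o, 'a) pbicat \<Rightarrow> bool" where
  "peircean_bicategory C \<longleftrightarrow>
     peircean_bicategory_loc (Arr C) (Dom C) (Cod C) (Ident C) (Comp C) (Otimes C) (Unit C)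
       (Tens C) (Sym C) (Le C) (Copy C) (Disc C) (Cocopy C) (Codisc C)
       (Neg C) (Meet C) (Join C) (Top C) (Bot C)"

definition ptens :: "('o, 'a) pbicat \<Rightarrow> 'a \<Rightarrow> 'a \<Rightarrow> 'a" where
  "ptens C a b = Neg C (Tens C (Neg C a) (Neg C b))"

end

theory Submission
  imports Defs
begin

context peircean_bicategory_loc
begin

lemmas [trans] = le_trans

lemma arr_comp [simp]: "arr f \<Longrightarrow> arr g \<Longrightarrow> cod f = dom g \<Longrightarrow> arr (comp f g)"
  using comp_arr by blast
lemma dom_comp [simp]: "arr f \<Longrightarrow> arr g \<Longrightarrow> cod f = dom g \<Longrightarrow> dom (comp f g) = dom f"
  using comp_arr by blast
lemma cod_comp [simp]: "arr f \<Longrightarrow> arr g \<Longrightarrow> cod f = dom g \<Longrightarrow> cod (comp f g) = cod g"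
  using comp_arr by blast
lemma arr_tens [simp]: "arr f \<Longrightarrow> arr g \<Longrightarrow> arr (tens f g)"
  using tens_arr by blast
lemma dom_tens [simp]: "arr f \<Longrightarrow> arr g \<Longrightarrow> dom (tens f g) = otimes (dom f) (dom g)"
  using tens_arr by blast
lemma cod_tens [simp]: "arr f \<Longrightarrow> arr g \<Longrightarrow> cod (tens f g) = otimes (cod f) (cod g)"
  using tens_arr by blast
lemma arr_neg [simp]: "arr f \<Longrightarrow> arr (neg f)" using neg_arr by blast
lemma dom_neg [simp]: "arr f \<Longrightarrow> dom (neg f) = dom f" using neg_arr by blast
lemma cod_neg [simp]: "arr f \<Longrightarrow> cod (neg f) = cod f" using neg_arr by blast

declare ident_arr [simp] copy_arr [simp] disc_arr [simp] cocopy_arr [simp] codisc_arr [simp]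
  top_arr [simp] bot_arr [simp] otimes_unit [simp] otimes_assoc [simp] sym_arr [simp]
  tens_unit [simp] tens_ident [simp]

lemma comp_id_l [simp]: "arr f \<Longrightarrow> dom f = X \<Longrightarrow> comp (ident X) f = f"
  using comp_ident_left by blast
lemma comp_id_r [simp]: "arr f \<Longrightarrow> cod f = X \<Longrightarrow> comp f (ident X) = f"
  using comp_ident_right by blast

lemma L1: "arr f \<Longrightarrow> arr g \<Longrightarrow> tens f g = comp (tens f (ident (dom g))) (tens (ident (cod f)) g)"
  using interchange[of f "ident (cod f)" "ident (dom g)" g] by simp
lemma L2: "arr f \<Longrightarrow> arr g \<Longrightarrow> tens f g = comp (tens (ident (dom f)) g) (tens f (ident (cod g)))"
  using interchange[of "ident (dom f)" f g "ident (cod g)"] by simp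

lemma sym_unit: "sym X unit = ident X"
proof -
  have "sym X (otimes unit unit) = comp (tens (sym X unit) (ident unit)) (tens (ident unit) (sym X unit))"
    by (rule sym_hexagon)
  hence e: "sym X unit = comp (sym X unit) (sym X unit)" by simp
  have i: "comp (sym X unit) (sym unit X) = ident X" using sym_inverse[of X unit] by simp
  have "sym X unit = comp (sym X unit) (ident X)" using comp_ident_right[of "sym X unit"] by simp
  also have "\<dots> = comp (sym X unit) (comp (sym X unit) (sym unit X))" by (simp add: i)
  also have "\<dots> = comp (comp (sym X unit) (sym X unit)) (sym unit X)"
    by (simp add: comp_assoc)
  also have "\<dots> = ident X" using e i by simp
  finally show ?thesis .
qed

lemma cocopy_unit_right: "comp (tens (ident X) (codisc X)) (cocopy X) = ident X"
proof -
  have "comp (tens (ident X) (codisc X)) (cocopy X)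
      = comp (tens (ident X) (codisc X)) (comp (sym X X) (cocopy X))" by (simp add: cocopy_comm)
  also have "\<dots> = comp (comp (tens (ident X) (codisc X)) (sym X X)) (cocopy X)"
    by (simp add: comp_assoc)
  also have "\<dots> = comp (comp (sym X unit) (tens (codisc X) (ident X))) (cocopy X)"
    using sym_natural[of "ident X" "codisc X"] by simp
  also have "\<dots> = ident X" by (simp add: sym_unit cocopy_unit)
  finally show ?thesis .
qed

lemma snake: "comp (tens (ident W) (comp (codisc W) (copy W))) (tens (comp (cocopy W) (disc W)) (ident W)) = ident W"
proof -
  have a: "tens (ident W) (comp (codisc W) (copy W)) = comp (tens (ident W) (codisc W)) (tens (ident W) (copy W))"
    using interchange[of "ident W" "ident W" "codisc W" "copy W"] by simp
  have b: "tens (comp (cocopy W) (disc W)) (ident W) = comp (tens (cocopy W) (ident W)) (tens (disc W) (ident W))"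
    using interchange[of "cocopy W" "disc W" "ident W" "ident W"] by simp
  have "comp (tens (ident W) (comp (codisc W) (copy W))) (tens (comp (cocopy W) (disc W)) (ident W))
     = comp (tens (ident W) (codisc W)) (comp (comp (tens (ident W) (copy W)) (tens (cocopy W) (ident W))) (tens (disc W) (ident W)))"
    unfolding a b by (simp add: comp_assoc)
  also have "\<dots> = comp (tens (ident W) (codisc W)) (comp (comp (cocopy W) (copy W)) (tens (disc W) (ident W)))"
    by (simp add: frobenius2)
  also have "\<dots> = comp (comp (tens (ident W) (codisc W)) (cocopy W)) (comp (copy W) (tens (disc W) (ident W)))"
    by (simp add: comp_assoc)
  also have "\<dots> = ident W" by (simp add: cocopy_unit_right copy_unit)
  finally show ?thesis .
qed

lemma top_eq: "top A B = comp (disc A) (codisc B)"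
proof (rule le_antisym)
  have "top A B = comp (top A B) (ident B)" using comp_ident_right[of "top A B"] by simp
  also have "le \<dots> (comp (top A B) (comp (disc B) (codisc B)))"
    by (rule comp_mono, rule le_refl, simp, rule disc_adj_unit, simp)
  also have "\<dots> = comp (comp (top A B) (disc B)) (codisc B)" by (simp add: comp_assoc)
  also have "le \<dots> (comp (disc A) (codisc B))"
    using lax_disc[of "top A B"] by (intro comp_mono, simp_all add: le_refl)
  finally show "le (top A B) (comp (disc A) (codisc B))" .
  show "le (comp (disc A) (codisc B)) (top A B)" using top_greatest[of "comp (disc A) (codisc B)"] by simp
qed

lemma neg_top: "neg (top A B) = bot A B"
proof -
  have p: "par (top A B) (neg (top A B))" unfolding par_def by simp
  have "meet (top A B) (neg (top A B)) = neg (top A B)"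
  proof (rule le_antisym)
    show "le (meet (top A B) (neg (top A B))) (neg (top A B))" using meet_lower(2)[OF p] .
    show "le (neg (top A B)) (meet (top A B) (neg (top A B)))"
      by (rule meet_greatest, metis top_greatest arr_neg dom_neg cod_neg top_arr, rule le_refl, simp)
  qed
  thus ?thesis using neg_meet[of "top A B"] by simp
qed

lemma disc_map: "is_map (disc A)"
  unfolding is_map_def
proof (intro conjI)
  show "arr (disc A)" by simp
  have "tens (disc A) (disc A) = comp (tens (disc A) (ident A)) (tens (ident unit) (disc A))"
    using L1[of "disc A" "disc A"] by simp
  hence "comp (copy A) (tens (disc A) (disc A)) = comp (comp (copy A) (tens (disc A) (ident A))) (disc A)"
    by (simp add: comp_assoc)
  thus "comp (disc A) (copy (cod (disc A))) = comp (copy (dom (disc A))) (tens (disc A) (disc A))"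
    by (simp add: copy_I copy_unit)
  show "comp (disc A) (disc (cod (disc A))) = disc (dom (disc A))" by (simp add: disc_I)
qed

lemma disc_bot: "comp (disc A) (bot unit B) = bot A B"
proof -
  have "comp (disc A) (bot unit B) = comp (disc A) (neg (top unit B))" by (simp add: neg_top)
  also have "\<dots> = neg (comp (disc A) (top unit B))" by (rule map_neg, rule disc_map, simp_all)
  also have "comp (disc A) (top unit B) = top A B" by (simp add: top_eq disc_I)
  finally show ?thesis by (simp add: neg_top)
qed

lemma name_bot: "le (tens (bot unit Y) (codisc W)) (bot unit (otimes Y W))"
proof -
  define eta where "eta = comp (codisc W) (copy W)"
  define eps where "eps = comp (cocopy W) (disc W)"
  define g where "g = bot unit (otimes Y W)"
  define ug where "ug = comp (tens g (ident W)) (tens (ident Y) eps)"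
  have [simp]: "arr eta" "dom eta = unit" "cod eta = otimes W W" unfolding eta_def by simp_all
  have [simp]: "arr eps" "dom eps = otimes W W" "cod eps = unit" unfolding eps_def by simp_all
  have [simp]: "arr g" "dom g = unit" "cod g = otimes Y W" unfolding g_def by simp_all
  have [simp]: "arr ug" "dom ug = W" "cod ug = Y" unfolding ug_def by simp_all
  have sn: "comp (tens (ident W) eta) (tens eps (ident W)) = ident W"
    unfolding eta_def eps_def by (rule snake)
  have a: "comp eta (tens ug (ident W)) = g"
  proof -
    have "tens ug (ident W) = comp (tens (tens g (ident W)) (ident W)) (tens (tens (ident Y) eps) (ident W))"
      unfolding ug_def using interchange[of "tens g (ident W)" "tens (ident Y) eps" "ident W" "ident W"] by simp
    also have "\<dots> = comp (tens g (ident (otimes W W))) (tens (ident Y) (tens eps (ident W)))"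
      by (simp add: tens_assoc)
    finally have 1: "tens ug (ident W) = \<dots>" .
    have 2: "comp eta (tens g (ident (otimes W W))) = comp g (tens (ident Y) (tens (ident W) eta))"
    proof -
      have "comp eta (tens g (ident (otimes W W))) = tens g eta"
        using L2[of g eta] by simp
      also have "\<dots> = comp g (tens (ident (otimes Y W)) eta)" using L1[of g eta] by simp
      also have "\<dots> = comp g (tens (ident Y) (tens (ident W) eta))"
        by (simp add: tens_assoc flip: tens_ident)
      finally show ?thesis .
    qed
    have "comp eta (tens ug (ident W)) = comp (comp eta (tens g (ident (otimes W W)))) (tens (ident Y) (tens eps (ident W)))"
      unfolding 1 by (simp add: comp_assoc)
    also have "\<dots> = comp g (comp (tens (ident Y) (tens (ident W) eta)) (tens (ident Y) (tens eps (ident W))))"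
      unfolding 2 by (simp add: comp_assoc)
    also have "\<dots> = comp g (tens (ident Y) (comp (tens (ident W) eta) (tens eps (ident W))))"
      using interchange[of "ident Y" "ident Y" "tens (ident W) eta" "tens eps (ident W)"] by simp
    also have "\<dots> = g" by (simp add: sn)
    finally show ?thesis .
  qed
  have c: "comp eta (tens (bot W Y) (ident W)) = tens (bot unit Y) (codisc W)"
  proof -
    have "tens (bot W Y) (ident W) = comp (tens (disc W) (ident W)) (tens (bot unit Y) (ident W))"
      using interchange[of "disc W" "bot unit Y" "ident W" "ident W"] by (simp add: disc_bot)
    hence "comp eta (tens (bot W Y) (ident W)) = comp (comp (codisc W) (comp (copy W) (tens (disc W) (ident W)))) (tens (bot unit Y) (ident W))"
      unfolding eta_def by (simp add: comp_assoc)
    also have "\<dots> = comp (codisc W) (tens (bot unit Y) (ident W))" by (simp add: copy_unit)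
    also have "\<dots> = tens (bot unit Y) (codisc W)" using L2[of "bot unit Y" "codisc W"] by simp
    finally show ?thesis .
  qed
  have "le (comp eta (tens (bot W Y) (ident W))) (comp eta (tens ug (ident W)))"
    by (rule comp_mono, rule le_refl, simp, rule tens_mono, metis bot_least \<open>arr ug\<close> \<open>dom ug = W\<close> \<open>cod ug = Y\<close>,
        rule le_refl, simp_all)
  thus ?thesis using a c g_def by simp
qed

lemma adj1: "le (comp (tens (ident X) (codisc Z)) (tens (ident X) (disc Z))) (ident X)"
proof -
  have "comp (tens (ident X) (codisc Z)) (tens (ident X) (disc Z)) = tens (ident X) (comp (codisc Z) (disc Z))"
    using interchange[of "ident X" "ident X" "codisc Z" "disc Z"] by simp
  also have "le \<dots> (tens (ident X) (ident unit))"
    by (rule tens_mono, simp add: le_refl, rule disc_adj_counit)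
  finally show ?thesis by simp
qed

lemma adj2: "le (ident (otimes X Z)) (comp (tens (ident X) (disc Z)) (tens (ident X) (codisc Z)))"
proof -
  have "ident (otimes X Z) = tens (ident X) (ident Z)" by simp
  also have "le \<dots> (tens (ident X) (comp (disc Z) (codisc Z)))"
    by (rule tens_mono, simp add: le_refl, rule disc_adj_unit)
  also have "\<dots> = comp (tens (ident X) (disc Z)) (tens (ident X) (codisc Z))"
    using interchange[of "ident X" "ident X" "disc Z" "codisc Z"] by simp
  finally show ?thesis .
qed

lemma tensT: "arr c \<Longrightarrow> tens c (top Z W) = comp (tens (ident (dom c)) (disc Z)) (comp c (tens (ident (cod c)) (codisc W)))"
proof -
  assume c: "arr c"
  have "tens c (top Z W) = comp (tens (ident (dom c)) (disc Z)) (tens c (codisc W))"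
    unfolding top_eq using interchange[of "ident (dom c)" c "disc Z" "codisc W"] c by simp
  also have "tens c (codisc W) = comp c (tens (ident (cod c)) (codisc W))"
    using L1[of c "codisc W"] c by simp
  finally show ?thesis .
qed

lemma bool1:
  assumes p: "par x y" and m: "le (meet x y) (bot (dom x) (cod x))"
  shows "le x (neg y)"
proof -
  have ax: "arr x" "arr y" "dom y = dom x" "cod y = cod x" using p unfolding par_def by auto
  have p2: "par y (neg y)" using ax unfolding par_def by simp
  have "le x (meet x (top (dom x) (cod x)))"
    by (rule meet_greatest, rule le_refl, simp add: ax, rule top_greatest, simp add: ax)
  also have "top (dom x) (cod x) = join y (neg y)" using neg_join[of y] ax by simp
  also have "meet x (join y (neg y)) = join (meet x y) (meet x (neg y))" by (rule distrib[OF p p2])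
  also have "le \<dots> (neg y)"
  proof (rule join_least)
    have "le (bot (dom x) (cod x)) (neg y)" using bot_least[of "neg y"] ax by simp
    thus "le (meet x y) (neg y)" by (rule le_trans[OF m])
    show "le (meet x (neg y)) (neg y)" by (rule meet_lower(2), unfold par_def, simp add: ax)
  qed
  finally show ?thesis .
qed

lemma main:
  assumes c: "arr c" and d: "arr d"
  shows "le (tens c d) (neg (tens (neg c) (neg d)))"
proof -
  define X where "X = dom c"
  define Y where "Y = cod c"
  define Z where "Z = dom d"
  define W where "W = cod d"
  define u where "u = tens c d"
  define v where "v = tens (neg c) (neg d)"
  define h where "h = meet u v"
  define \<pi> where "\<pi> = tens (ident X) (disc Z)"
  define \<rho> where "\<rho> = tens (ident X) (codisc Z)"
  define \<pi>' where "\<pi>' = tens (ident Y) (disc W)"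
  define \<iota> where "\<iota> = tens (ident Y) (codisc W)"
  have [simp]: "dom c = X" "cod c = Y" "dom d = Z" "cod d = W" using X_def Y_def Z_def W_def by auto
  have [simp]: "arr \<pi>" "dom \<pi> = otimes X Z" "cod \<pi> = X" unfolding \<pi>_def by simp_all
  have [simp]: "arr \<rho>" "cod \<rho> = otimes X Z" "dom \<rho> = X" unfolding \<rho>_def by simp_all
  have [simp]: "arr \<pi>'" "dom \<pi>' = otimes Y W" "cod \<pi>' = Y" unfolding \<pi>'_def by simp_all
  have [simp]: "arr \<iota>" "cod \<iota> = otimes Y W" "dom \<iota> = Y" unfolding \<iota>_def by simp_all
  have puv: "par u v" unfolding par_def u_def v_def using c d by simp
  have [simp]: "arr h" "dom h = otimes X Z" "cod h = otimes Y W"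
    using meet_arr[OF puv] c d unfolding h_def u_def by simp_all
  have hc: "le h (comp \<pi> (comp c' \<iota>))" if c': "arr c'" "dom c' = X" "cod c' = Y"
      and hu: "le h (tens c' d')" and d': "arr d'" "dom d' = Z" "cod d' = W" for c' d'
  proof -
    have "le h (tens c' d')" by (rule hu)
    also have "le \<dots> (tens c' (top Z W))"
      by (rule tens_mono, rule le_refl, simp add: c', metis top_greatest d')
    also have "\<dots> = comp \<pi> (comp c' \<iota>)" using tensT[of c' Z W] c' unfolding \<pi>_def \<iota>_def by simp
    finally show ?thesis .
  qed
  have rh: "le (comp \<rho> h) (comp c' \<iota>)" if c': "arr c'" "dom c' = X" "cod c' = Y"
      and hu: "le h (comp \<pi> (comp c' \<iota>))" for c'
  proof -
    have "le (comp \<rho> h) (comp \<rho> (comp \<pi> (comp c' \<iota>)))" by (rule comp_mono, rule le_refl, simp_all add: hu)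
    also have "\<dots> = comp (comp \<rho> \<pi>) (comp c' \<iota>)" using c' by (simp add: comp_assoc)
    also have "le \<dots> (comp (ident X) (comp c' \<iota>))"
      by (rule comp_mono, unfold \<rho>_def \<pi>_def, rule adj1, rule le_refl, simp_all add: c')
    finally show ?thesis using c' by simp
  qed
  have h1: "le h u" using meet_lower(1)[OF puv] h_def by simp
  have h2: "le h v" using meet_lower(2)[OF puv] h_def by simp
  have r1: "le (comp \<rho> h) (comp c \<iota>)"
    by (rule rh, simp_all add: c, rule hc[of c d], simp_all add: c d h1[unfolded u_def])
  have r2: "le (comp \<rho> h) (comp (neg c) \<iota>)"
    by (rule rh, simp_all add: c, rule hc[of "neg c" "neg d"], simp_all add: c d h2[unfolded v_def])
  define k where "k = meet (comp c \<iota>) (comp (neg c) \<iota>)"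
  have pk: "par (comp c \<iota>) (comp (neg c) \<iota>)" unfolding par_def using c by simp
  have [simp]: "arr k" "dom k = X" "cod k = otimes Y W"
    using meet_arr[OF pk] c unfolding k_def by simp_all
  have rk: "le (comp \<rho> h) k" unfolding k_def by (rule meet_greatest[OF r1 r2])
  have kp: "le (comp k \<pi>') c'" if c': "arr c'" "dom c' = X" "cod c' = Y" and kc: "le k (comp c' \<iota>)" for c'
  proof -
    have "le (comp k \<pi>') (comp (comp c' \<iota>) \<pi>')" by (rule comp_mono, rule kc, rule le_refl, simp_all)
    also have "\<dots> = comp c' (comp \<iota> \<pi>')" using c' by (simp add: comp_assoc)
    also have "le \<dots> (comp c' (ident Y))"
      by (rule comp_mono, rule le_refl, simp add: c', unfold \<iota>_def \<pi>'_def, rule adj1, simp add: c')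
    finally show ?thesis using c' by simp
  qed
  have kb: "le (comp k \<pi>') (bot X Y)"
  proof -
    have k1: "le k (comp c \<iota>)" unfolding k_def by (rule meet_lower(1)[OF pk])
    have k2: "le k (comp (neg c) \<iota>)" unfolding k_def by (rule meet_lower(2)[OF pk])
    have "le (comp k \<pi>') (meet c (neg c))"
      by (rule meet_greatest, rule kp[OF _ _ _ k1], simp_all add: c, rule kp[OF _ _ _ k2], simp_all add: c)
    thus ?thesis using neg_meet[OF c] by simp
  qed
  have kbot: "le k (bot X (otimes Y W))"
  proof -
    have "k = comp k (ident (otimes Y W))" by simp
    also have "le \<dots> (comp k (comp \<pi>' \<iota>))"
      by (rule comp_mono, rule le_refl, simp, unfold \<pi>'_def \<iota>_def, rule adj2, simp)
    also have "\<dots> = comp (comp k \<pi>') \<iota>" by (simp add: comp_assoc)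
    also have "le \<dots> (comp (bot X Y) \<iota>)" by (rule comp_mono, rule kb, rule le_refl, simp_all)
    also have "\<dots> = comp (disc X) (comp (bot unit Y) \<iota>)" by (subst disc_bot[of X Y, symmetric], simp add: comp_assoc)
    also have "comp (bot unit Y) \<iota> = tens (bot unit Y) (codisc W)"
      unfolding \<iota>_def using L1[of "bot unit Y" "codisc W"] by simp
    also have "le (comp (disc X) \<dots>) (comp (disc X) (bot unit (otimes Y W)))"
      by (rule comp_mono, rule le_refl, simp, rule name_bot, simp)
    also have "\<dots> = bot X (otimes Y W)" by (rule disc_bot)
    finally show ?thesis .
  qed
  have pd: "comp \<pi> (disc X) = disc (otimes X Z)"
    unfolding \<pi>_def disc_otimes using L2[of "disc X" "disc Z"] by simp
  have hb: "le h (bot (otimes X Z) (otimes Y W))"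
  proof -
    have "h = comp (ident (otimes X Z)) h" by simp
    also have "le \<dots> (comp (comp \<pi> \<rho>) h)"
      by (rule comp_mono, unfold \<pi>_def \<rho>_def, rule adj2, rule le_refl, simp_all)
    also have "\<dots> = comp \<pi> (comp \<rho> h)" by (simp add: comp_assoc)
    also have "le \<dots> (comp \<pi> (bot X (otimes Y W)))"
      by (rule comp_mono, rule le_refl, simp, rule le_trans[OF rk kbot], simp)
    also have "\<dots> = comp (comp \<pi> (disc X)) (bot unit (otimes Y W))" by (subst disc_bot[of X "otimes Y W", symmetric], simp add: comp_assoc)
    also have "\<dots> = bot (otimes X Z) (otimes Y W)" by (simp add: pd disc_bot)
    finally show ?thesis .
  qed
  have "le u (neg v)"
    by (rule bool1[OF puv], unfold h_def[symmetric], simp add: u_def c d hb)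
  thus ?thesis unfolding u_def v_def .
qed

end

theorem lemma70:
  fixes C :: "('o, 'a) pbicat" and c d :: 'a
  assumes "peircean_bicategory C"
    and "Arr C c" and "Arr C d"
  shows "Le C (Tens C c d) (ptens C c d)"
proof -
  interpret P: peircean_bicategory_loc "Arr C" "Dom C" "Cod C" "Ident C" "Comp C" "Otimes C" "Unit C"
       "Tens C" "Sym C" "Le C" "Copy C" "Disc C" "Cocopy C" "Codisc C"
       "Neg C" "Meet C" "Join C" "Top C" "Bot C"
    using assms(1) unfolding peircean_bicategory_def .
  show ?thesis unfolding ptens_def by (rule P.main[OF assms(2,3)])
qed

end
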